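(* Let $F=(n_F)_{n\ge0}$ be the Fibonacci sequence, $0_F=0$, $1_F=2_F=1$, $(n+2)_F=(n+1)_F+n_F$. Then for all integers $k,n$ with $0\le k<n$, the layer $\langle\Phi_{k+1}\to\Phi_n\rangle$ of the cobweb poset of $F$ (which has $m=n-k$ levels) admits at least one tiling by blocks of type $\sigma P_m$.
   Context: Notation: $n_F\equiv F_n$. For a sequence $F=(n_F)_{n\ge0}$ of nonnegative integers, the cobweb poset of $F$ has, for each $s\ge1$, a level $\Phi_s$ consisting of $s_F$ distinct vertices (levels pairwise disjoint), plus a root level $\Phi_0$ with one vertex; for $x\in\Phi_i$, $y\in\Phi_j$ one has $x<y$ iff $i<j$. For $1\le a\le b$, the layer $\langle\Phi_a\to\Phi_b\rangle$ is the subposet on $\Phi_a\cup\dots\cup\Phi_b$; it has $m=b-a+1$ levels, and its maximal chains are exactly the tuples $(x_a,\dots,x_b)$ with $x_j\in\Phi_j$, i.e. the set $\Phi_a\times\dots\times\Phi_b$. For a permutation $\sigma$ of $\{1,\dots,m\}$, a block of type $\sigma P_m$ in this layer is the subposet induced on $V_a\cup\dots\cup V_b$ where $V_{a-1+i}\subseteq\Phi_{a-1+i}$ and $|V_{a-1+i}|=\sigma(i)_F$ for $i=1,\dots,m$ (a copy of the prime cobweb poset $P_m$, whose levels have sizes $1_F,\dots,m_F$, with its levels permuted by $\sigma$); its maximal chains form the set $V_a\times\dots\times V_b$. A tiling of the layer by blocks of type $\sigma P_m$ is a finite family of such blocks ($\sigma$ may vary from block to block) that are pairwise max-disjoint (no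 two share a maximal chain) and together contain every maximal chain of the layer; equivalently, the sets $V_a\times\dots\times V_b$ of the blocks partition $\Phi_a\times\dots\times\Phi_b$. *)

theory Defs
  imports "HOL-Number_Theory.Fib" "HOL-Combinatorics.Permutations"
begin

text \<open>Cobweb poset of a sequence F: level s (s \<ge> 1) is modelled as the vertex set
  {..<F s}; levels are kept apart by indexing vertices with their level.
  A maximal chain of the layer from level a to level b is a choice function
  x with x j \<in> level j for j \<in> {a..b}, i.e. an element of PiE.\<close>

definition cobweb_level :: "(nat \<Rightarrow> nat) \<Rightarrow> nat \<Rightarrow> nat set" where
  "cobweb_level F s = {..<F s}"

definition layer_chains :: "(nat \<Rightarrow> nat) \<Rightarrow> nat \<Rightarrow> nat \<Rightarrow> (nat \<Rightarrow> nat) set" where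
  "layer_chains F a b = PiE {a..b} (cobweb_level F)"

definition is_block ::
  "(nat \<Rightarrow> nat) \<Rightarrow> nat \<Rightarrow> nat \<Rightarrow> (nat \<Rightarrow> nat) \<Rightarrow> (nat \<Rightarrow> nat set) \<Rightarrow> bool" where
  "is_block F a b \<sigma> V \<longleftrightarrow>
     \<sigma> permutes {1..b - a + 1} \<and>
     (\<forall>j\<in>{a..b}. V j \<subseteq> cobweb_level F j) \<and>
     (\<forall>i\<in>{1..b - a + 1}. card (V (a - 1 + i)) = F (\<sigma> i))"

definition block_chains :: "nat \<Rightarrow> nat \<Rightarrow> (nat \<Rightarrow> nat set) \<Rightarrow> (nat \<Rightarrow> nat) set" where
  "block_chains a b V = PiE {a..b} V"

definition is_tiling ::
  "(nat \<Rightarrow> nat) \<Rightarrow> nat \<Rightarrow> nat \<Rightarrow> ((nat \<Rightarrow> nat) \<times> (nat \<Rightarrow> nat set)) set \<Rightarrow> bool" where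
  "is_tiling F a b T \<longleftrightarrow>
     finite T \<and>
     (\<forall>(\<sigma>, V)\<in>T. is_block F a b \<sigma> V) \<and>
     (\<forall>B1\<in>T. \<forall>B2\<in>T. B1 \<noteq> B2 \<longrightarrow>
        block_chains a b (snd B1) \<inter> block_chains a b (snd B2) = {}) \<and>
     (\<Union>B\<in>T. block_chains a b (snd B)) = layer_chains F a b"

end

theory Submission
  imports Defs
begin

definition tiles :: "(nat\<Rightarrow>nat) \<Rightarrow> nat set \<Rightarrow> nat \<Rightarrow> (nat \<Rightarrow> nat set) \<Rightarrow> (nat \<Rightarrow> nat set) set \<Rightarrow> bool" where
"tiles F I m S T \<longleftrightarrow> finite T \<and>
 (\<forall>V\<in>T. (\<forall>i\<in>I. V i \<subseteq> S i) \<and> (\<forall>i. i \<notin> I \<longrightarrow> V i = {}) \<and>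
     (\<exists>h. bij_betw h I {1..m} \<and> (\<forall>i\<in>I. card (V i) = F (h i)))) \<and>
 (\<forall>V1\<in>T. \<forall>V2\<in>T. V1 \<noteq> V2 \<longrightarrow> PiE I V1 \<inter> PiE I V2 = {}) \<and>
 (\<Union>V\<in>T. PiE I V) = PiE I S"

lemma tiles_pieces:
  assumes P: "finite P" and j: "j \<in> I" and SQ: "S j = (\<Union>t\<in>P. Q t)"
    and dis: "\<And>t t'. t\<in>P \<Longrightarrow> t'\<in>P \<Longrightarrow> t\<noteq>t' \<Longrightarrow> Q t \<inter> Q t' = {}"
    and ex: "\<And>t. t\<in>P \<Longrightarrow> \<exists>T. tiles F I m (S(j:=Q t)) T"
  shows "\<exists>T. tiles F I m S T"
proof -
  obtain TT where TT: "\<And>t. t\<in>P \<Longrightarrow> tiles F I m (S(j:=Q t)) (TT t)" using ex by metis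
  have fin: "finite (\<Union>t\<in>P. TT t)" using TT P unfolding tiles_def by auto
  have blk: "\<forall>V\<in>(\<Union>t\<in>P. TT t). (\<forall>i\<in>I. V i \<subseteq> S i) \<and> (\<forall>i. i \<notin> I \<longrightarrow> V i = {}) \<and>
     (\<exists>h. bij_betw h I {1..m} \<and> (\<forall>i\<in>I. card (V i) = F (h i)))"
  proof
    fix V assume "V \<in> (\<Union>t\<in>P. TT t)"
    then obtain t where t: "t \<in> P" "V \<in> TT t" by auto
    have "Q t \<subseteq> S j" using SQ t by auto
    then show "(\<forall>i\<in>I. V i \<subseteq> S i) \<and> (\<forall>i. i \<notin> I \<longrightarrow> V i = {}) \<and>
     (\<exists>h. bij_betw h I {1..m} \<and> (\<forall>i\<in>I. card (V i) = F (h i)))"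
      using TT[OF t(1)] t(2) unfolding tiles_def
      by (smt (verit, ccfv_threshold) fun_upd_apply subset_trans)
  qed
  have disj: "\<forall>V1\<in>(\<Union>t\<in>P. TT t). \<forall>V2\<in>(\<Union>t\<in>P. TT t). V1 \<noteq> V2 \<longrightarrow> PiE I V1 \<inter> PiE I V2 = {}"
  proof (intro ballI impI)
    fix V1 V2 assume "V1 \<in> (\<Union>t\<in>P. TT t)" "V2 \<in> (\<Union>t\<in>P. TT t)" and ne: "V1 \<noteq> V2"
    then obtain t1 t2 where t: "t1 \<in> P" "V1 \<in> TT t1" "t2 \<in> P" "V2 \<in> TT t2" by auto
    show "PiE I V1 \<inter> PiE I V2 = {}"
    proof (cases "t1 = t2")
      case True then show ?thesis using TT[OF t(1)] t ne unfolding tiles_def by auto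
    next
      case False
      have "V1 j \<subseteq> Q t1" using TT[OF t(1)] t j unfolding tiles_def by fastforce
      moreover have "V2 j \<subseteq> Q t2" using TT[OF t(3)] t j unfolding tiles_def by fastforce
      ultimately have "V1 j \<inter> V2 j = {}" using dis[OF t(1) t(3) False] by auto
      then show ?thesis using j by (auto simp: PiE_iff)
    qed
  qed
  have cov: "(\<Union>V\<in>(\<Union>t\<in>P. TT t). PiE I V) = PiE I S"
  proof -
    have "(\<Union>V\<in>(\<Union>t\<in>P. TT t). PiE I V) = (\<Union>t\<in>P. \<Union>V\<in>TT t. PiE I V)" by auto
    also have "\<dots> = (\<Union>t\<in>P. PiE I (S(j:=Q t)))" using TT unfolding tiles_def by auto
    also have "\<dots> = PiE I S"
    proof
      show "(\<Union>t\<in>P. PiE I (S(j:=Q t))) \<subseteq> PiE I S" using SQ by (auto simp: PiE_iff) (metis UN_I)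
      show "PiE I S \<subseteq> (\<Union>t\<in>P. PiE I (S(j:=Q t)))"
      proof
        fix x assume x: "x \<in> PiE I S"
        then have "x j \<in> S j" using j by auto
        then obtain t where "t \<in> P" "x j \<in> Q t" using SQ by auto
        then show "x \<in> (\<Union>t\<in>P. PiE I (S(j:=Q t)))" using x by (auto simp: PiE_iff)
      qed
    qed
    finally show ?thesis .
  qed
  show ?thesis using fin blk disj cov unfolding tiles_def by blast
qed


lemma restr_PiE:
  assumes "x \<in> PiE (insert j I) V" "j \<notin> I"
  shows "x(j:=undefined) \<in> PiE I V"
proof -
  have "\<forall>i\<in>I. (x(j:=undefined)) i \<in> V i" using assms by (auto simp: PiE_iff)
  moreover have "x(j:=undefined) \<in> extensional I"
  unfolding extensional_def proof (intro CollectI allI impI)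
    fix i assume "i \<notin> I" then show "(x(j:=undefined)) i = undefined"
      using assms(1) by (cases "i = j") (auto simp: PiE_iff extensional_def)
  qed
  ultimately show ?thesis by (simp add: PiE_iff)
qed

lemma ext_PiE:
  assumes "y \<in> PiE I V" "j \<notin> I" "y = x(j:=undefined)" "x j \<in> W"
    "x \<in> extensional (insert j I)"
  shows "x \<in> PiE (insert j I) (V(j:=W))"
proof -
  have "\<forall>i\<in>insert j I. x i \<in> (V(j:=W)) i"
  proof
    fix i assume "i \<in> insert j I"
    then show "x i \<in> (V(j:=W)) i"
    proof (cases "i = j")
      case False
      then have "i \<in> I" using \<open>i \<in> insert j I\<close> by auto
      then have "y i \<in> V i" using assms(1) by (auto simp: PiE_iff)
      then show ?thesis using False assms(3) by simp
    qed (use assms in simp)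
  qed
  then show ?thesis using assms(5) by (simp add: PiE_iff)
qed

lemma tilesD:
  assumes "tiles F I m S T" "V \<in> T"
  shows "\<forall>i\<in>I. V i \<subseteq> S i" "\<forall>i. i \<notin> I \<longrightarrow> V i = {}"
    "\<exists>h. bij_betw h I {1..m} \<and> (\<forall>i\<in>I. card (V i) = F (h i))"
  using assms unfolding tiles_def by auto

lemma tilesD2:
  assumes "tiles F I m S T"
  shows "finite T" "\<And>V1 V2. V1 \<in> T \<Longrightarrow> V2 \<in> T \<Longrightarrow> V1 \<noteq> V2 \<Longrightarrow> PiE I V1 \<inter> PiE I V2 = {}"
    "(\<Union>V\<in>T. PiE I V) = PiE I S"
  using assms unfolding tiles_def by auto

lemma tilesI:
  assumes "finite T" "\<And>V. V \<in> T \<Longrightarrow> (\<forall>i\<in>I. V i \<subseteq> S i) \<and> (\<forall>i. i \<notin> I \<longrightarrow> V i = {}) \<and>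
     (\<exists>h. bij_betw h I {1..m} \<and> (\<forall>i\<in>I. card (V i) = F (h i)))"
   "\<And>V1 V2. V1 \<in> T \<Longrightarrow> V2 \<in> T \<Longrightarrow> V1 \<noteq> V2 \<Longrightarrow> PiE I V1 \<inter> PiE I V2 = {}"
    "(\<Union>V\<in>T. PiE I V) = PiE I S"
  shows "tiles F I m S T"
proof -
  have h1: "\<forall>V\<in>T. (\<forall>i\<in>I. V i \<subseteq> S i) \<and> (\<forall>i. i \<notin> I \<longrightarrow> V i = {}) \<and>
     (\<exists>h. bij_betw h I {1..m} \<and> (\<forall>i\<in>I. card (V i) = F (h i)))"
    by (rule ballI) (rule assms(2))
  have h2: "\<forall>V1\<in>T. \<forall>V2\<in>T. V1 \<noteq> V2 \<longrightarrow> PiE I V1 \<inter> PiE I V2 = {}"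
    by (intro ballI impI) (rule assms(3))
  show ?thesis unfolding tiles_def by (intro conjI assms(1) assms(4) h1 h2)
qed

lemma bij_ext: assumes "bij_betw h I {1..m}" "j \<notin> I" shows "bij_betw (h(j:=Suc m)) (insert j I) {1..Suc m}"
proof -
  have "bij_betw (h(j:=Suc m)) I {1..m}" using assms by (subst bij_betw_cong[where g=h]) auto
  moreover have "bij_betw (h(j:=Suc m)) {j} {Suc m}" by simp
  ultimately have "bij_betw (h(j:=Suc m)) (I \<union> {j}) ({1..m} \<union> {Suc m})"
    by (intro bij_betw_combine) auto
  moreover have "I \<union> {j} = insert j I" "{1..m} \<union> {Suc m} = {1..Suc m}" by auto
  ultimately show ?thesis by simp
qed

lemma prod_blk:
  assumes j: "j \<notin> I" and T: "tiles F I m S T" and W: "card W = F (Suc m)"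
    and V': "V' \<in> (\<lambda>V. V(j:=W)) ` T"
  shows "(\<forall>i\<in>insert j I. V' i \<subseteq> (S(j:=W)) i) \<and> (\<forall>i. i \<notin> insert j I \<longrightarrow> V' i = {}) \<and>
     (\<exists>h. bij_betw h (insert j I) {1..Suc m} \<and> (\<forall>i\<in>insert j I. card (V' i) = F (h i)))"
proof -
  obtain V where V: "V \<in> T" and V'V: "V' = V(j:=W)" using V' by blast
  have p1: "\<forall>i\<in>I. V i \<subseteq> S i" using tilesD(1)[OF T V] .
  have p2: "\<forall>i. i \<notin> I \<longrightarrow> V i = {}" using tilesD(2)[OF T V] .
  obtain h where h1: "bij_betw h I {1..m}" and h2: "\<forall>i\<in>I. card (V i) = F (h i)"
    using tilesD(3)[OF T V] by blast
  have b: "bij_betw (h(j:=Suc m)) (insert j I) {1..Suc m}" using bij_ext[OF h1 j] .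
  have c: "\<forall>i\<in>insert j I. card (V' i) = F ((h(j:=Suc m)) i)"
  proof
    fix i assume i: "i \<in> insert j I"
    show "card (V' i) = F ((h(j:=Suc m)) i)"
    proof (cases "i = j")
      case True then show ?thesis unfolding V'V using W by simp
    next
      case False then have "i \<in> I" using i by simp
      then show ?thesis unfolding V'V using False h2 by simp
    qed
  qed
  have a1: "\<forall>i\<in>insert j I. V' i \<subseteq> (S(j:=W)) i"
  proof
    fix i assume i: "i \<in> insert j I"
    show "V' i \<subseteq> (S(j:=W)) i"
    proof (cases "i = j")
      case True then show ?thesis unfolding V'V by simp
    next
      case False then have "i \<in> I" using i by simp
      then show ?thesis unfolding V'V using False p1 by simp
    qed
  qed
  have a2: "\<forall>i. i \<notin> insert j I \<longrightarrow> V' i = {}"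
  proof (intro allI impI)
    fix i assume "i \<notin> insert j I"
    then show "V' i = {}" unfolding V'V using p2 by simp
  qed
  have e: "\<exists>h. bij_betw h (insert j I) {1..Suc m} \<and> (\<forall>i\<in>insert j I. card (V' i) = F (h i))"
    using b c by (intro exI[of _ "h(j:=Suc m)"] conjI)
  show ?thesis using a1 a2 e by (intro conjI)
qed

lemma prod_disj:
  assumes j: "j \<notin> I" and T: "tiles F I m S T"
    and V: "V1 \<in> T" "V2 \<in> T" "V1(j:=W) \<noteq> V2(j:=W)"
  shows "PiE (insert j I) (V1(j:=W)) \<inter> PiE (insert j I) (V2(j:=W)) = {}"
proof (rule ccontr)
  have "V1 \<noteq> V2" using V(3) by metis
  then have d: "PiE I V1 \<inter> PiE I V2 = {}" using tilesD2(2)[OF T V(1,2)] by blast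
  assume "PiE (insert j I) (V1(j:=W)) \<inter> PiE (insert j I) (V2(j:=W)) \<noteq> {}"
  then obtain x where x1: "x \<in> PiE (insert j I) (V1(j:=W))" and x2: "x \<in> PiE (insert j I) (V2(j:=W))" by blast
  have y1: "x(j:=undefined) \<in> PiE I (V1(j:=W))" using restr_PiE[OF x1 j] .
  have y2: "x(j:=undefined) \<in> PiE I (V2(j:=W))" using restr_PiE[OF x2 j] .
  have e1: "PiE I (V1(j:=W)) = PiE I V1" using j by (intro PiE_cong) auto
  have e2: "PiE I (V2(j:=W)) = PiE I V2" using j by (intro PiE_cong) auto
  show False using d y1 y2 e1 e2 by blast
qed

lemma prod_cov:
  assumes j: "j \<notin> I" and T: "tiles F I m S T"
  shows "(\<Union>V'\<in>(\<lambda>V. V(j:=W)) ` T. PiE (insert j I) V') = PiE (insert j I) (S(j:=W))"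
proof
  show "(\<Union>V'\<in>(\<lambda>V. V(j:=W)) ` T. PiE (insert j I) V') \<subseteq> PiE (insert j I) (S(j:=W))"
  proof
    fix x assume "x \<in> (\<Union>V'\<in>(\<lambda>V. V(j:=W)) ` T. PiE (insert j I) V')"
    then obtain V where V: "V \<in> T" and xV: "x \<in> PiE (insert j I) (V(j:=W))" by blast
    have "\<forall>i\<in>I. V i \<subseteq> S i" using tilesD(1)[OF T V] .
    then have sub: "\<And>i. i \<in> insert j I \<Longrightarrow> (V(j:=W)) i \<subseteq> (S(j:=W)) i" by auto
    show "x \<in> PiE (insert j I) (S(j:=W))" by (rule subsetD[OF PiE_mono[OF sub] xV])
  qed
  show "PiE (insert j I) (S(j:=W)) \<subseteq> (\<Union>V'\<in>(\<lambda>V. V(j:=W)) ` T. PiE (insert j I) V')"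
  proof
    fix x assume x: "x \<in> PiE (insert j I) (S(j:=W))"
    have y: "x(j:=undefined) \<in> PiE I (S(j:=W))" using restr_PiE[OF x j] .
    have e: "PiE I (S(j:=W)) = PiE I S" using j by (intro PiE_cong) auto
    have "x(j:=undefined) \<in> (\<Union>V\<in>T. PiE I V)" using y e tilesD2(3)[OF T] by simp
    then obtain V where V: "V \<in> T" and yV: "x(j:=undefined) \<in> PiE I V" by blast
    have xj: "x j \<in> W" using x unfolding PiE_iff by simp
    have "x \<in> extensional (insert j I)" using x unfolding PiE_iff by blast
    then have "x \<in> PiE (insert j I) (V(j:=W))" using ext_PiE[OF yV j refl xj] by blast
    then show "x \<in> (\<Union>V'\<in>(\<lambda>V. V(j:=W)) ` T. PiE (insert j I) V')" using V by blast
  qed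
qed

lemma tiles_prod:
  assumes j: "j \<notin> I" and T: "tiles F I m S T" and W: "card W = F (Suc m)"
  shows "tiles F (insert j I) (Suc m) (S(j:=W)) ((\<lambda>V. V(j:=W)) ` T)"
proof (rule tilesI)
  show "finite ((\<lambda>V. V(j:=W)) ` T)" using tilesD2(1)[OF T] by simp
next
  fix V' assume "V' \<in> (\<lambda>V. V(j:=W)) ` T"
  then show "(\<forall>i\<in>insert j I. V' i \<subseteq> (S(j:=W)) i) \<and> (\<forall>i. i \<notin> insert j I \<longrightarrow> V' i = {}) \<and>
     (\<exists>h. bij_betw h (insert j I) {1..Suc m} \<and> (\<forall>i\<in>insert j I. card (V' i) = F (h i)))"
    by (rule prod_blk[OF j T W])
next
  fix V1' V2' assume "V1' \<in> (\<lambda>V. V(j:=W)) ` T" "V2' \<in> (\<lambda>V. V(j:=W)) ` T" and ne: "V1' \<noteq> V2'"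
  then obtain V1 V2 where V: "V1 \<in> T" "V2 \<in> T" and e: "V1' = V1(j:=W)" "V2' = V2(j:=W)" by blast
  show "PiE (insert j I) V1' \<inter> PiE (insert j I) V2' = {}"
    unfolding e by (rule prod_disj[OF j T V]) (use ne e in simp)
next
  show "(\<Union>V'\<in>(\<lambda>V. V(j:=W)) ` T. PiE (insert j I) V') = PiE (insert j I) (S(j:=W))"
    by (rule prod_cov[OF j T])
qed

lemma tiles_base:
  assumes h: "bij_betw h I {1..m}" and c: "\<forall>i\<in>I. card (S i) = F (h i)"
  shows "tiles F I m S {(\<lambda>i. if i \<in> I then S i else {})}"
proof (rule tilesI)
  show "finite {(\<lambda>i. if i \<in> I then S i else {})}" by simp
next
  fix V assume "V \<in> {(\<lambda>i. if i \<in> I then S i else {})}"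
  then have V: "V = (\<lambda>i. if i \<in> I then S i else {})" by simp
  have "\<forall>i\<in>I. card (V i) = F (h i)" using c unfolding V by simp
  then show "(\<forall>i\<in>I. V i \<subseteq> S i) \<and> (\<forall>i. i \<notin> I \<longrightarrow> V i = {}) \<and>
     (\<exists>h. bij_betw h I {1..m} \<and> (\<forall>i\<in>I. card (V i) = F (h i)))"
    using h unfolding V by auto
next
  fix V1 V2 assume "V1 \<in> {(\<lambda>i. if i \<in> I then S i else {})}" "V2 \<in> {(\<lambda>i. if i \<in> I then S i else {})}" "V1 \<noteq> V2"
  then show "PiE I V1 \<inter> PiE I V2 = {}" by simp
next
  have "PiE I (\<lambda>i. if i \<in> I then S i else {}) = PiE I S" by (intro PiE_cong) simp
  then show "(\<Union>V\<in>{(\<lambda>i. if i \<in> I then S i else {})}. PiE I V) = PiE I S" by simp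
qed

lemma split2:
  assumes "finite A" "card A = a + b"
  shows "\<exists>A1 A2. A1 \<union> A2 = A \<and> A1 \<inter> A2 = {} \<and> card A1 = a \<and> card A2 = b"
proof -
  obtain A1 where A1: "A1 \<subseteq> A" "card A1 = a" "finite A1"
    using obtain_subset_with_card_n[of a A] assms by auto
  have "card (A - A1) = b" using A1 assms by (simp add: card_Diff_subset)
  then show ?thesis using A1 by (intro exI[of _ A1] exI[of _ "A - A1"]) auto
qed

lemma splitp:
  assumes "finite A" "card A = p * q"
  shows "\<exists>Q. (\<forall>t<p. card (Q t) = q) \<and> (\<forall>t<p. \<forall>t'<p. t \<noteq> t' \<longrightarrow> Q t \<inter> Q t' = {}) \<and> (\<Union>t<p. Q t) = A"
  using assms
proof (induction p arbitrary: A)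
  case 0
  then have "A = {}" by simp
  then show ?case by (intro exI[of _ "\<lambda>_. {}"]) simp
next
  case (Suc p)
  obtain A1 A2 where A: "A1 \<union> A2 = A" "A1 \<inter> A2 = {}" "card A1 = q" "card A2 = p * q"
    using split2[of A q "p*q"] Suc.prems by auto
  have "finite A2" using A(1) Suc.prems(1) by auto
  from Suc.IH[OF this A(4)] obtain Q where Q: "\<forall>t<p. card (Q t) = q" "\<forall>t<p. \<forall>t'<p. t \<noteq> t' \<longrightarrow> Q t \<inter> Q t' = {}" "(\<Union>t<p. Q t) = A2"
    by (elim exE conjE)
  have sub: "\<And>t. t < p \<Longrightarrow> Q t \<subseteq> A2" using Q(3) by auto
  define Q' where "Q' = Q(p := A1)"
  have f1: "\<forall>t<Suc p. card (Q' t) = q"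
  proof (intro allI impI)
    fix t assume "t < Suc p"
    then show "card (Q' t) = q" using Q(1) A(3) unfolding Q'_def by (cases "t = p") simp_all
  qed
  have f2: "\<forall>t<Suc p. \<forall>t'<Suc p. t \<noteq> t' \<longrightarrow> Q' t \<inter> Q' t' = {}"
  proof (intro allI impI)
    fix t t' assume t: "t < Suc p" "t' < Suc p" "t \<noteq> t'"
    show "Q' t \<inter> Q' t' = {}"
    proof (cases "t = p")
      case True then have t'p: "t' < p" using t by simp
      have e: "Q' t = A1" "Q' t' = Q t'" using True t(3) unfolding Q'_def by simp_all
      show ?thesis unfolding e using sub[OF t'p] A(2) by blast
    next
      case False then have tp: "t < p" using t by simp
      show ?thesis
      proof (cases "t' = p")
        case True
        have e: "Q' t' = A1" "Q' t = Q t" using True t(3) unfolding Q'_def by simp_all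
        show ?thesis unfolding e using sub[OF tp] A(2) by blast
      next
        case False then have t'p: "t' < p" using t by simp
        have e: "Q' t' = Q t'" "Q' t = Q t" using False \<open>t \<noteq> p\<close> unfolding Q'_def by simp_all
        show ?thesis unfolding e using Q(2) tp t'p t(3) by blast
      qed
    qed
  qed
  have f3: "(\<Union>t<Suc p. Q' t) = A"
  proof -
    have "(\<Union>t<Suc p. Q' t) = Q' p \<union> (\<Union>t<p. Q' t)" by (simp add: lessThan_Suc)
    also have "(\<Union>t<p. Q' t) = (\<Union>t<p. Q t)" unfolding Q'_def by (intro SUP_cong) simp_all
    also have "Q' p = A1" unfolding Q'_def by simp
    finally show ?thesis using Q(3) A(1) by simp
  qed
  show ?case by (rule exI[of _ Q']) (intro conjI f1 f2 f3)
qed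

lemma bij_low:
  fixes k m :: nat
  assumes g: "bij_betw g I {k+1..k+m}" and j: "j \<in> I" "g j = k + m" and k: "k \<ge> 1" and m: "m \<ge> 1"
  shows "bij_betw g (I - {j}) {k+1..k+(m-1)}" "bij_betw (g(j:=k)) I {(k-1)+1..(k-1)+m}"
proof -
  have b1: "bij_betw g (I - {j}) ({k+1..k+m} - {k+m})"
    using g j m by (intro bij_betw_DiffI[OF g]) auto
  have e1: "{k+1..k+m} - {k+m} = {k+1..k+(m-1)}" using m by auto
  show b: "bij_betw g (I - {j}) {k+1..k+(m-1)}" using b1 e1 by simp
  have "bij_betw (g(j:=k)) (I - {j}) {k+1..k+(m-1)}" using b by (subst bij_betw_cong[where g=g]) auto
  moreover have "bij_betw (g(j:=k)) {j} {k}" by simp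
  ultimately have "bij_betw (g(j:=k)) ((I - {j}) \<union> {j}) ({k+1..k+(m-1)} \<union> {k})"
    by (intro bij_betw_combine) auto
  moreover have "(I - {j}) \<union> {j} = I" using j by auto
  moreover have "{k+1..k+(m-1)} \<union> {k} = {(k-1)+1..(k-1)+m}" using k m by auto
  ultimately show "bij_betw (g(j:=k)) I {(k-1)+1..(k-1)+m}" by simp
qed

lemma main_tiling:
  "bij_betw g I {k+1..k+m} \<Longrightarrow> (\<forall>i\<in>I. card (S i) = fib (g i)) \<Longrightarrow> (\<forall>i\<in>I. finite (S i))
   \<Longrightarrow> \<exists>T. tiles fib I m S T"
proof (induction "k+m" arbitrary: k m I g S rule: less_induct)
  case less
  note g = less.prems(1) and cS = less.prems(2) and fS = less.prems(3)
  show ?case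
  proof (cases "k = 0 \<or> m = 0")
    case True
    have "bij_betw g I {1..m}"
    proof (cases "k = 0")
      case True then show ?thesis using g by simp
    next
      case False then have "m = 0" using \<open>k = 0 \<or> m = 0\<close> by simp
      then show ?thesis using g by simp
    qed
    moreover have "\<forall>i\<in>I. card (S i) = fib (g i)" using cS .
    ultimately show ?thesis using tiles_base by blast
  next
    case False
    then have k: "k \<ge> 1" and m: "m \<ge> 1" by auto
    define j where "j = inv_into I g (k+m)"
    have km: "k + m \<in> {k+1..k+m}" using m by simp
    have jI: "j \<in> I" unfolding j_def using g km by (metis bij_betw_def inv_into_into)
    have gj: "g j = k + m" unfolding j_def using g km by (metis bij_betw_def f_inv_into_f)
    note bl = bij_low[OF g jI gj k m]
    have cj: "card (S j) = fib (k+1) * fib m + fib k * fib (m-1)"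
    proof -
      have "fib (Suc ((m-1) + k)) = fib (Suc k) * fib (Suc (m-1)) + fib k * fib (m-1)" by (rule fib_add)
      moreover have "Suc ((m-1) + k) = k + m" "Suc (m-1) = m" using m by auto
      ultimately show ?thesis using cS jI gj by (simp add: add.commute)
    qed
    have fj: "finite (S j)" using fS jI by blast
    obtain A B where AB: "A \<union> B = S j" "A \<inter> B = {}" "card A = fib (k+1) * fib m" "card B = fib k * fib (m-1)"
      using split2[OF fj cj] by (elim exE conjE)
    have fA: "finite A" and fB: "finite B" using AB(1) fj by (metis finite_Un)+
    have tA: "\<exists>T. tiles fib I m (S(j:=A)) T"
    proof -
      obtain Q where Q: "\<forall>t<fib (k+1). card (Q t) = fib m" "\<forall>t<fib (k+1). \<forall>t'<fib (k+1). t \<noteq> t' \<longrightarrow> Q t \<inter> Q t' = {}"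
        "(\<Union>t<fib (k+1). Q t) = A"
        using splitp[OF fA AB(3)] by (elim exE conjE)
      show ?thesis
      proof (rule tiles_pieces[where P="{..<fib (k+1)}" and j=j and Q=Q])
        show "finite {..<fib (k+1)}" by simp
        show "j \<in> I" by (rule jI)
        show "(S(j:=A)) j = (\<Union>t\<in>{..<fib (k+1)}. Q t)" using Q(3) by simp
        show "\<And>t t'. t \<in> {..<fib (k+1)} \<Longrightarrow> t' \<in> {..<fib (k+1)} \<Longrightarrow> t \<noteq> t' \<Longrightarrow> Q t \<inter> Q t' = {}"
          using Q(2) by blast
      next
        fix t assume t: "t \<in> {..<fib (k+1)}"
        have cQ: "card (Q t) = fib (Suc (m-1))" using Q(1) t m by simp
        have "\<exists>T. tiles fib (I - {j}) (m-1) S T"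
        proof (rule less.hyps[where k=k and m="m-1" and I="I - {j}" and g=g and S=S])
          show "k + (m-1) < k + m" using m by simp
          show "bij_betw g (I - {j}) {k+1..k+(m-1)}" by (rule bl(1))
          show "\<forall>i\<in>I - {j}. card (S i) = fib (g i)" using cS by blast
          show "\<forall>i\<in>I - {j}. finite (S i)" using fS by blast
        qed
        then obtain T where T: "tiles fib (I - {j}) (m-1) S T" by (elim exE)
        have "tiles fib (insert j (I - {j})) (Suc (m-1)) (S(j:=Q t)) ((\<lambda>V. V(j:=Q t)) ` T)"
          by (rule tiles_prod[OF _ T cQ]) simp
        moreover have "insert j (I - {j}) = I" using jI by auto
        moreover have "Suc (m-1) = m" using m by simp
        moreover have "(S(j:=A))(j:=Q t) = S(j:=Q t)" by simp
        ultimately show "\<exists>T. tiles fib I m ((S(j:=A))(j:=Q t)) T" by metis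
      qed
    qed
    have tB: "\<exists>T. tiles fib I m (S(j:=B)) T"
    proof -
      obtain Q where Q: "\<forall>t<fib (m-1). card (Q t) = fib k" "\<forall>t<fib (m-1). \<forall>t'<fib (m-1). t \<noteq> t' \<longrightarrow> Q t \<inter> Q t' = {}"
        "(\<Union>t<fib (m-1). Q t) = B"
        using splitp[OF fB, of "fib (m-1)" "fib k"] AB(4) by (simp add: mult.commute) (elim exE conjE)
      show ?thesis
      proof (rule tiles_pieces[where P="{..<fib (m-1)}" and j=j and Q=Q])
        show "finite {..<fib (m-1)}" by simp
        show "j \<in> I" by (rule jI)
        show "(S(j:=B)) j = (\<Union>t\<in>{..<fib (m-1)}. Q t)" using Q(3) by simp
        show "\<And>t t'. t \<in> {..<fib (m-1)} \<Longrightarrow> t' \<in> {..<fib (m-1)} \<Longrightarrow> t \<noteq> t' \<Longrightarrow> Q t \<inter> Q t' = {}"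
          using Q(2) by blast
      next
        fix t assume t: "t \<in> {..<fib (m-1)}"
        have sub: "Q t \<subseteq> B" using Q(3) t by blast
        have "\<exists>T. tiles fib I m ((S(j:=B))(j:=Q t)) T"
        proof (rule less.hyps[where k="k-1" and m=m and I=I and g="g(j:=k)" and S="(S(j:=B))(j:=Q t)"])
          show "k - 1 + m < k + m" using k by simp
          show "bij_betw (g(j:=k)) I {(k-1)+1..(k-1)+m}" by (rule bl(2))
          show "\<forall>i\<in>I. card (((S(j:=B))(j:=Q t)) i) = fib ((g(j:=k)) i)"
            using cS Q(1) t by auto
          show "\<forall>i\<in>I. finite (((S(j:=B))(j:=Q t)) i)"
            using fS sub fB by (auto intro: finite_subset)
        qed
        then show "\<exists>T. tiles fib I m ((S(j:=B))(j:=Q t)) T" .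
      qed
    qed
    show ?thesis
    proof (rule tiles_pieces[where P="{0::nat,1}" and j=j and Q="\<lambda>t. if t = 0 then A else B"])
      show "finite {0::nat,1}" by simp
      show "j \<in> I" by (rule jI)
      show "S j = (\<Union>t\<in>{0::nat,1}. if t = 0 then A else B)" using AB(1) by auto
      show "\<And>t t'. t \<in> {0::nat,1} \<Longrightarrow> t' \<in> {0,1} \<Longrightarrow> t \<noteq> t' \<Longrightarrow> (if t = 0 then A else B) \<inter> (if t' = 0 then A else B) = {}"
        using AB(2) by auto
    next
      fix t :: nat assume "t \<in> {0,1}"
      then show "\<exists>T. tiles fib I m (S(j:=(if t = 0 then A else B))) T"
        using tA tB by (cases "t = 0") simp_all
    qed
  qed
qed

lemma sigma_exists:
  fixes k m :: nat
  assumes h: "bij_betw h {k+1..k+m} {1..m}" and c: "\<forall>i\<in>{k+1..k+m}. card (V i) = fib (h i)"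
  shows "\<exists>\<sigma>. \<sigma> permutes {1..m} \<and> (\<forall>i\<in>{1..m}. card (V (k + i)) = fib (\<sigma> i))"
proof -
  define \<sigma> where "\<sigma> = (\<lambda>i. if i \<in> {1..m} then h (k + i) else i)"
  have sh: "bij_betw (\<lambda>i. k + i) {1..m} {k+1..k+m}"
    unfolding bij_betw_def
  proof
    show "inj_on (\<lambda>i. k + i) {1..m}" by (simp add: inj_on_def)
    show "(\<lambda>i. k + i) ` {1..m} = {k+1..k+m}"
    proof
      show "(\<lambda>i. k + i) ` {1..m} \<subseteq> {k+1..k+m}" by auto
      show "{k+1..k+m} \<subseteq> (\<lambda>i. k + i) ` {1..m}"
      proof
        fix x assume x: "x \<in> {k+1..k+m}"
        then have "x = k + (x - k)" "x - k \<in> {1..m}" by auto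
        then show "x \<in> (\<lambda>i. k + i) ` {1..m}" by (metis imageI)
      qed
    qed
  qed
  have "bij_betw (h \<circ> (\<lambda>i. k + i)) {1..m} {1..m}" by (rule bij_betw_trans[OF sh h])
  then have "bij_betw \<sigma> {1..m} {1..m}" unfolding \<sigma>_def
    by (subst bij_betw_cong[where g="h \<circ> (\<lambda>i. k + i)"]) auto
  moreover have "\<sigma> x = x" if "x \<notin> {1..m}" for x
    using that unfolding \<sigma>_def by (simp only: if_not_P if_False)
  ultimately have p: "\<sigma> permutes {1..m}" by (rule bij_imp_permutes)
  have "\<forall>i\<in>{1..m}. card (V (k + i)) = fib (\<sigma> i)"
  proof
    fix i assume i: "i \<in> {1..m}"
    then have "k + i \<in> {k+1..k+m}" by auto
    then show "card (V (k + i)) = fib (\<sigma> i)" using c i unfolding \<sigma>_def by simp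
  qed
  then show ?thesis using p by blast
qed

theorem theorem2:
  fixes k n :: nat
  assumes "k < n"
  shows "\<exists>T. is_tiling fib (k + 1) n T"
proof -
  define m where "m = n - k"
  have nm: "n = k + m" using assms unfolding m_def by simp
  have "\<exists>T. tiles fib {k+1..k+m} m (cobweb_level fib) T"
    by (rule main_tiling[where g=id]) (auto simp: cobweb_level_def)
  then obtain T where T: "tiles fib {k+1..k+m} m (cobweb_level fib) T" by (elim exE)
  define sig where "sig = (\<lambda>V :: nat \<Rightarrow> nat set. SOME \<sigma>. \<sigma> permutes {1..m} \<and> (\<forall>i\<in>{1..m}. card (V (k + i)) = fib (\<sigma> i)))"
  have sigp: "sig V permutes {1..m} \<and> (\<forall>i\<in>{1..m}. card (V (k + i)) = fib (sig V i))" if V: "V \<in> T" for V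
  proof -
    obtain h where h: "bij_betw h {k+1..k+m} {1..m}" "\<forall>i\<in>{k+1..k+m}. card (V i) = fib (h i)"
      using tilesD(3)[OF T V] by (elim exE conjE)
    show ?thesis unfolding sig_def by (rule someI_ex[OF sigma_exists[OF h]])
  qed
  have e1: "n - (k + 1) + 1 = m" and e2: "\<And>i. k + 1 - 1 + i = k + i" using nm assms unfolding m_def by auto
  have e3: "{k + 1..n} = {k+1..k+m}" using nm by simp
  define T' where "T' = (\<lambda>V. (sig V, V)) ` T"
  have "is_tiling fib (k + 1) n T'"
    unfolding is_tiling_def
  proof (intro conjI)
    show "finite T'" unfolding T'_def using tilesD2(1)[OF T] by simp
    show "\<forall>(\<sigma>, V)\<in>T'. is_block fib (k + 1) n \<sigma> V"
    proof
      fix B assume "B \<in> T'"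
      then obtain V where V: "V \<in> T" "B = (sig V, V)" unfolding T'_def by blast
      have sub: "\<forall>j\<in>{k+1..k+m}. V j \<subseteq> cobweb_level fib j" using tilesD(1)[OF T V(1)] .
      have "is_block fib (k + 1) n (sig V) V"
        unfolding is_block_def e1 e2 e3 using sigp[OF V(1)] sub by blast
      then show "case B of (\<sigma>, V) \<Rightarrow> is_block fib (k + 1) n \<sigma> V" using V(2) by simp
    qed
    show "\<forall>B1\<in>T'. \<forall>B2\<in>T'. B1 \<noteq> B2 \<longrightarrow> block_chains (k + 1) n (snd B1) \<inter> block_chains (k + 1) n (snd B2) = {}"
    proof (intro ballI impI)
      fix B1 B2 assume "B1 \<in> T'" "B2 \<in> T'" and ne: "B1 \<noteq> B2"
      then obtain V1 V2 where V: "V1 \<in> T" "B1 = (sig V1, V1)" "V2 \<in> T" "B2 = (sig V2, V2)"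
        unfolding T'_def by blast
      have "V1 \<noteq> V2" using ne V by auto
      then have "PiE {k+1..k+m} V1 \<inter> PiE {k+1..k+m} V2 = {}" using tilesD2(2)[OF T V(1,3)] by blast
      then show "block_chains (k + 1) n (snd B1) \<inter> block_chains (k + 1) n (snd B2) = {}"
        unfolding block_chains_def e3 using V(2,4) by simp
    qed
    have "(\<Union>B\<in>T'. block_chains (k + 1) n (snd B)) = (\<Union>V\<in>T. PiE {k+1..k+m} V)"
      unfolding T'_def block_chains_def e3 by simp
    also have "\<dots> = PiE {k+1..k+m} (cobweb_level fib)" by (rule tilesD2(3)[OF T])
    finally show "(\<Union>B\<in>T'. block_chains (k + 1) n (snd B)) = layer_chains fib (k + 1) n"
      unfolding layer_chains_def e3 .
  qed
  then show ?thesis by blast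
qed

end
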